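(* Let $n\ge1$. If $f,g,h:\Omega_n\to\mathbb{R}$ have mutually disjoint supports, then $(f+g+h)^\wedge=(f+g)^\wedge+(f+h)^\wedge+(g+h)^\wedge-\widehat{f}-\widehat{g}-\widehat{h}$.
   Context: $\Omega_n=\{\omega_0,\dots,\omega_{2^n-1}\}$ is the set of strings $\alpha_0\alpha_1\cdots\alpha_n$ with $\alpha_k\in\{0,1\}$, $\alpha_0=0$ ($\omega_j$ being the binary representation of $j$). For $u:\Omega_n\to[0,\infty)$, $\widehat{u}$ is the $2^n\times2^n$ matrix with entries $\widehat{u}_{jk}=\min[u(\omega_j),u(\omega_k)]$. For arbitrary $f:\Omega_n\to\mathbb{R}$, write $f=f^+-f^-$ with $f^+,f^-\ge0$, $f^+f^-=0$, and set $\widehat{f}=\widehat{f^+}-\widehat{f^-}$; $(f)^\wedge$ means $\widehat{f}$. *)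

theory Defs
  imports Main "HOL.Real"
begin

text \<open>Omega_n is identified with the index set {0..<2^n}: the index j stands for the
  string omega_j (binary representation of j, with leading digit 0).
  Functions on Omega_n are modelled as functions nat => real (values outside
  the index set are irrelevant); 2^n x 2^n matrices as nat => nat => real,
  compared only on indices in Omega_n.\<close>

definition Omega :: "nat \<Rightarrow> nat set" where
  "Omega n = {0..<2^n}"

definition pos_part :: "(nat \<Rightarrow> real) \<Rightarrow> nat \<Rightarrow> real" where
  "pos_part f = (\<lambda>j. max (f j) 0)"

definition neg_part :: "(nat \<Rightarrow> real) \<Rightarrow> nat \<Rightarrow> real" where
  "neg_part f = (\<lambda>j. max (- f j) 0)"

definition hat0 :: "(nat \<Rightarrow> real) \<Rightarrow> nat \<Rightarrow> nat \<Rightarrow> real" where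
  "hat0 u = (\<lambda>j k. min (u j) (u k))"

definition hat :: "(nat \<Rightarrow> real) \<Rightarrow> nat \<Rightarrow> nat \<Rightarrow> real" where
  "hat f = (\<lambda>j k. hat0 (pos_part f) j k - hat0 (neg_part f) j k)"

definition disjoint_supp :: "nat \<Rightarrow> (nat \<Rightarrow> real) \<Rightarrow> (nat \<Rightarrow> real) \<Rightarrow> bool" where
  "disjoint_supp n f g = (\<forall>j\<in>Omega n. f j = 0 \<or> g j = 0)"

end

theory Submission
  imports Defs
begin

theorem lemma5p4:
  fixes n :: nat and f g h :: "nat \<Rightarrow> real"
  assumes "n \<ge> 1"
    and "disjoint_supp n f g" and "disjoint_supp n f h" and "disjoint_supp n g h"
  shows "\<forall>j\<in>Omega n. \<forall>k\<in>Omega n.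
           hat (\<lambda>i. f i + g i + h i) j k
         = hat (\<lambda>i. f i + g i) j k + hat (\<lambda>i. f i + h i) j k + hat (\<lambda>i. g i + h i) j k
           - hat f j k - hat g j k - hat h j k"
proof (intro ballI)
  fix j k assume j: "j \<in> Omega n" and k: "k \<in> Omega n"
  have J: "(g j = 0 \<and> h j = 0) \<or> (f j = 0 \<and> h j = 0) \<or> (f j = 0 \<and> g j = 0)"
    using assms(2-4) j unfolding disjoint_supp_def by blast
  have K: "(g k = 0 \<and> h k = 0) \<or> (f k = 0 \<and> h k = 0) \<or> (f k = 0 \<and> g k = 0)"
    using assms(2-4) k unfolding disjoint_supp_def by blast
  show "hat (\<lambda>i. f i + g i + h i) j k
         = hat (\<lambda>i. f i + g i) j k + hat (\<lambda>i. f i + h i) j k + hat (\<lambda>i. g i + h i) j k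
           - hat f j k - hat g j k - hat h j k"
    using J K unfolding hat_def hat0_def pos_part_def neg_part_def
    by (elim disjE conjE; simp add: min_def max_def; linarith)
qed

end
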